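(* Let $T$ be a tree and $x,y$ distinct leaves of $T$. Let $P$ be the $xy$-path in $T$, and let $x',y'$ be the vertices of $T$ adjacent to $x$ and $y$, respectively. Write $V(P)=\{0,1,\ldots,r\}$ along the path with $x=0$ and $y=r$. For $i\in\{1,\ldots,r-1\}$ let $T_i$ be the union of the components of $T-V(P)$ that are adjacent to vertex $i$ in $T$ (the empty graph if there are none). If $T'$ is the tree obtained from $T$ by deleting $x$ and adding a new leaf adjacent to $y'$, then $$W(T')-W(T)=\sum_{i=1}^{r-1}(r-2i)|V(T_i)|-(r-2).$$
   Context: All graphs are finite and simple; $d(u,v)$ denotes distance and $W(G)=\sum_{\{u,v\}\subseteq V(G)} d(u,v)$ is the Wiener index (sum over unordered pairs of vertices). A leaf is a vertex of degree $1$. *)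

theory Defs
  imports Main
begin

definition simple_graph :: "'a set \<Rightarrow> ('a \<Rightarrow> 'a \<Rightarrow> bool) \<Rightarrow> bool" where
  "simple_graph V E \<longleftrightarrow> finite V \<and> (\<forall>u v. E u v \<longrightarrow> E v u) \<and> (\<forall>u. \<not> E u u)
     \<and> (\<forall>u v. E u v \<longrightarrow> u \<in> V \<and> v \<in> V)"

definition walk_in :: "'a set \<Rightarrow> ('a \<Rightarrow> 'a \<Rightarrow> bool) \<Rightarrow> 'a list \<Rightarrow> bool" where
  "walk_in S E p \<longleftrightarrow> p \<noteq> [] \<and> set p \<subseteq> S \<and> (\<forall>i. Suc i < length p \<longrightarrow> E (p ! i) (p ! Suc i))"

definition reach_in :: "'a set \<Rightarrow> ('a \<Rightarrow> 'a \<Rightarrow> bool) \<Rightarrow> 'a \<Rightarrow> 'a \<Rightarrow> bool" where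
  "reach_in S E u v \<longleftrightarrow> (\<exists>p. walk_in S E p \<and> hd p = u \<and> last p = v)"

definition is_path :: "'a set \<Rightarrow> ('a \<Rightarrow> 'a \<Rightarrow> bool) \<Rightarrow> 'a list \<Rightarrow> 'a \<Rightarrow> 'a \<Rightarrow> bool" where
  "is_path V E p u v \<longleftrightarrow> walk_in V E p \<and> distinct p \<and> hd p = u \<and> last p = v"

definition has_cycle :: "'a set \<Rightarrow> ('a \<Rightarrow> 'a \<Rightarrow> bool) \<Rightarrow> bool" where
  "has_cycle V E \<longleftrightarrow> (\<exists>c. walk_in V E c \<and> distinct c \<and> length c \<ge> 3 \<and> E (last c) (hd c))"

definition connected_graph :: "'a set \<Rightarrow> ('a \<Rightarrow> 'a \<Rightarrow> bool) \<Rightarrow> bool" where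
  "connected_graph V E \<longleftrightarrow> (\<forall>u\<in>V. \<forall>v\<in>V. reach_in V E u v)"

definition is_tree :: "'a set \<Rightarrow> ('a \<Rightarrow> 'a \<Rightarrow> bool) \<Rightarrow> bool" where
  "is_tree V E \<longleftrightarrow> simple_graph V E \<and> V \<noteq> {} \<and> connected_graph V E \<and> \<not> has_cycle V E"

definition degree :: "'a set \<Rightarrow> ('a \<Rightarrow> 'a \<Rightarrow> bool) \<Rightarrow> 'a \<Rightarrow> nat" where
  "degree V E u = card {v\<in>V. E u v}"

definition leaf :: "'a set \<Rightarrow> ('a \<Rightarrow> 'a \<Rightarrow> bool) \<Rightarrow> 'a \<Rightarrow> bool" where
  "leaf V E u \<longleftrightarrow> u \<in> V \<and> degree V E u = 1"

definition gdist :: "'a set \<Rightarrow> ('a \<Rightarrow> 'a \<Rightarrow> bool) \<Rightarrow> 'a \<Rightarrow> 'a \<Rightarrow> nat" where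
  "gdist V E u v = (LEAST n. \<exists>p. walk_in V E p \<and> hd p = u \<and> last p = v \<and> length p = Suc n)"

definition wiener :: "'a set \<Rightarrow> ('a \<Rightarrow> 'a \<Rightarrow> bool) \<Rightarrow> nat" where
  "wiener V E = (\<Sum>e\<in>{e. e \<subseteq> V \<and> card e = 2}.
      (THE d. \<exists>u v. e = {u, v} \<and> d = gdist V E u v))"

text \<open>Vertex set of T_i: union of components of T - V(P) adjacent to the i-th path vertex.\<close>
definition branch_verts :: "'a set \<Rightarrow> ('a \<Rightarrow> 'a \<Rightarrow> bool) \<Rightarrow> 'a list \<Rightarrow> nat \<Rightarrow> 'a set" where
  "branch_verts V E p i = {v \<in> V - set p. \<exists>w. reach_in (V - set p) E v w \<and> E w (p ! i)}"

text \<open>T': delete leaf x and attach a new leaf z to y'.\<close>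
definition move_verts :: "'a set \<Rightarrow> 'a \<Rightarrow> 'a \<Rightarrow> 'a set" where
  "move_verts V x z = insert z (V - {x})"

definition move_edges :: "('a \<Rightarrow> 'a \<Rightarrow> bool) \<Rightarrow> 'a \<Rightarrow> 'a \<Rightarrow> 'a \<Rightarrow> 'a \<Rightarrow> 'a \<Rightarrow> bool" where
  "move_edges E x y' z u v \<longleftrightarrow> (E u v \<and> u \<noteq> x \<and> v \<noteq> x) \<or> (u = z \<and> v = y') \<or> (u = y' \<and> v = z)"

end

theory Submission
  imports Defs
begin


lemma walk_Nil[simp]: "\<not> walk_in S E []"
  by (simp add: walk_in_def)

lemma walk_single[simp]: "walk_in S E [a] \<longleftrightarrow> a \<in> S"
  by (simp add: walk_in_def)

lemma walk_Cons2[simp]: "walk_in S E (a # b # q) \<longleftrightarrow> a \<in> S \<and> E a b \<and> walk_in S E (b # q)"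
proof
  assume h: "walk_in S E (a # b # q)"
  have "E a b" using h unfolding walk_in_def by (metis length_Cons nth_Cons_0 nth_Cons_Suc zero_less_Suc Suc_less_eq)
  moreover have "walk_in S E (b # q)" unfolding walk_in_def
  proof (intro conjI allI impI)
    fix i assume "Suc i < length (b # q)"
    then have "E ((a # b # q) ! Suc i) ((a # b # q) ! Suc (Suc i))" using h unfolding walk_in_def by auto
    then show "E ((b # q) ! i) ((b # q) ! Suc i)" by simp
  qed (use h in \<open>auto simp: walk_in_def\<close>)
  ultimately show "a \<in> S \<and> E a b \<and> walk_in S E (b # q)" using h by (simp add: walk_in_def)
next
  assume h: "a \<in> S \<and> E a b \<and> walk_in S E (b # q)"
  show "walk_in S E (a # b # q)" unfolding walk_in_def
  proof (intro conjI allI impI)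
    fix i assume "Suc i < length (a # b # q)"
    then show "E ((a # b # q) ! i) ((a # b # q) ! Suc i)" using h unfolding walk_in_def
      by (cases i) auto
  qed (use h in \<open>auto simp: walk_in_def\<close>)
qed

lemma walk_Cons: "walk_in S E (a # q) \<longleftrightarrow> a \<in> S \<and> (q = [] \<or> (E a (hd q) \<and> walk_in S E q))"
  by (cases q) auto

lemma walk_append:
  "walk_in S E q1 \<Longrightarrow> walk_in S E q2 \<Longrightarrow> E (last q1) (hd q2) \<Longrightarrow> walk_in S E (q1 @ q2)"
proof (induction q1 rule: induct_list012)
  case (3 a b r) then show ?case by simp
qed (auto simp: walk_Cons)

lemma walk_appendD1: "walk_in S E (q1 @ q2) \<Longrightarrow> q1 \<noteq> [] \<Longrightarrow> walk_in S E q1"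
proof (induction q1 rule: induct_list012)
  case (2 a) then show ?case by (auto simp: walk_Cons)
next
  case (3 a b r) then show ?case by simp
qed simp

lemma walk_appendD2: "walk_in S E (q1 @ q2) \<Longrightarrow> q2 \<noteq> [] \<Longrightarrow> walk_in S E q2"
proof (induction q1)
  case (Cons a r) then show ?case by (auto simp: walk_Cons)
qed simp

lemma walk_rev: "(\<And>u v. E u v \<Longrightarrow> E v u) \<Longrightarrow> walk_in S E q \<Longrightarrow> walk_in S E (rev q)"
proof (induction q rule: induct_list012)
  case (3 a b r)
  have "walk_in S E (rev (b # r) @ [a])"
    by (rule walk_append) (use 3 in auto)
  then show ?case by simp
qed auto

lemma walk_take: "walk_in S E q \<Longrightarrow> 0 < k \<Longrightarrow> walk_in S E (take k q)"
  by (metis append_take_drop_id walk_appendD1 take_eq_Nil walk_Nil neq0_conv)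

lemma walk_drop: "walk_in S E q \<Longrightarrow> k < length q \<Longrightarrow> walk_in S E (drop k q)"
  by (metis append_take_drop_id walk_appendD2 drop_eq_Nil not_le)

lemma walk_mono: "walk_in S E q \<Longrightarrow> set q \<subseteq> S' \<Longrightarrow> walk_in S' E q"
  by (simp add: walk_in_def)

lemma walk_set: "walk_in S E q \<Longrightarrow> set q \<subseteq> S"
  by (simp add: walk_in_def)

lemma walk_edge: "walk_in S E q \<Longrightarrow> Suc i < length q \<Longrightarrow> E (q ! i) (q ! Suc i)"
  by (simp add: walk_in_def)

lemma walk_shorten:
  assumes "walk_in S E w"
  shows "\<exists>q. walk_in S E q \<and> distinct q \<and> hd q = hd w \<and> last q = last w \<and> set q \<subseteq> set w \<and> length q \<le> length w"
  using assms
proof (induction w)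
  case Nil then show ?case by simp
next
  case (Cons a r)
  show ?case
  proof (cases "r = []")
    case True then show ?thesis using Cons by (intro exI[of _ "[a]"]) auto
  next
    case False
    then have ar: "a \<in> S" "E a (hd r)" "walk_in S E r" using Cons.prems by (auto simp: walk_Cons)
    from Cons.IH[OF ar(3)] obtain q where q: "walk_in S E q" "distinct q" "hd q = hd r" "last q = last r"
      "set q \<subseteq> set r" "length q \<le> length r" by blast
    have qne: "q \<noteq> []" using q(1) by auto
    show ?thesis
    proof (cases "a \<in> set q")
      case False
      then show ?thesis using q ar qne False \<open>r \<noteq> []\<close>
        by (intro exI[of _ "a # q"]) (auto simp: walk_Cons)
    next
      case True
      then obtain xs ys where xy: "q = xs @ a # ys" by (meson split_list)
      have "walk_in S E (a # ys)" using q(1) xy walk_appendD2 by blast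
      moreover have "distinct (a # ys)" using q(2) xy by simp
      moreover have "last (a # ys) = last (a # r)" using q(4) xy \<open>r \<noteq> []\<close> by simp
      moreover have "set (a # ys) \<subseteq> set (a # r)" using q(5) xy by auto
      moreover have "length (a # ys) \<le> length (a # r)" using q(6) xy by simp
      ultimately show ?thesis by (intro exI[of _ "a # ys"]) simp
    qed
  qed
qed



lemma two_paths_cycle:
  assumes sym: "\<And>u v. E u v \<Longrightarrow> E v u"
    and w1: "walk_in V E (a # r1)" and w2: "walk_in V E (a # r2)"
    and d1: "distinct (a # r1)" and d2: "distinct (a # r2)"
    and ne1: "r1 \<noteq> []" and ne2: "r2 \<noteq> []" and l: "last r1 = last r2" and h: "hd r1 \<noteq> hd r2"
  shows "has_cycle V E"
proof -
  define k where "k = (LEAST k. k < length r1 \<and> r1 ! k \<in> set r2)"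
  have ex: "length r1 - 1 < length r1 \<and> r1 ! (length r1 - 1) \<in> set r2"
    using ne1 ne2 l by (metis diff_less last_conv_nth last_in_set length_greater_0_conv zero_less_one)
  have k: "k < length r1" "r1 ! k \<in> set r2"
    using LeastI_ex[of "\<lambda>k. k < length r1 \<and> r1 ! k \<in> set r2"] ex unfolding k_def by blast+
  have kmin: "r1 ! m \<notin> set r2" if "m < k" for m
    using not_less_Least[of m "\<lambda>k. k < length r1 \<and> r1 ! k \<in> set r2"] that k(1) unfolding k_def by auto
  obtain j where j: "j < length r2" "r2 ! j = r1 ! k" by (metis in_set_conv_nth k(2))
  define A where "A = a # take (Suc k) r1"
  define B where "B = rev (take j r2)"
  define c where "c = A @ B"
  have wr2: "walk_in V E r2" using w2 ne2 by (simp add: walk_Cons)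
  have wA: "walk_in V E A" unfolding A_def
    using walk_take[OF w1, of "Suc (Suc k)"] by simp
  have lastA: "last A = r1 ! k" unfolding A_def using k(1)
    by (simp add: take_Suc_conv_app_nth)
  have hd_r2: "hd r2 = r2 ! 0" using ne2 by (simp add: hd_conv_nth)
  have hd_r1: "hd r1 = r1 ! 0" using ne1 by (simp add: hd_conv_nth)
  have Ear2: "E a (hd r2)" using w2 ne2 by (simp add: walk_Cons)
  have wc: "walk_in V E c \<and> E (last c) (hd c)"
  proof (cases "j = 0")
    case True
    then have "c = A" unfolding c_def B_def by simp
    moreover have "last A = hd r2" using lastA j True hd_r2 by simp
    ultimately show ?thesis using wA sym Ear2 unfolding A_def by auto
  next
    case False
    have wB: "walk_in V E B" unfolding B_def
      by (rule walk_rev[OF sym]) (use walk_take[OF wr2, of j] False in auto)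
    have "take j r2 = take (j - 1) r2 @ [r2 ! (j - 1)]" using False j(1)
      by (metis Suc_pred' less_imp_diff_less neq0_conv take_Suc_conv_app_nth)
    then have hdB: "hd B = r2 ! (j - 1)" unfolding B_def by (metis hd_rev last_snoc)
    have "E (r2 ! (j - 1)) (r2 ! j)" using walk_edge[OF wr2, of "j - 1"] False j(1) by simp
    then have e: "E (last A) (hd B)" using lastA hdB j(2) sym by simp
    have "walk_in V E c" unfolding c_def by (rule walk_append[OF wA wB e])
    moreover have "last c = hd r2" unfolding c_def B_def using False ne2
      by (simp add: last_rev)
    moreover have "hd c = a" unfolding c_def A_def by simp
    ultimately show ?thesis using sym Ear2 by auto
  qed
  have dA: "distinct A" unfolding A_def using d1 by (auto dest: in_set_takeD)
  have dB: "distinct B" unfolding B_def using d2 by simp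
  have disj: "set A \<inter> set B = {}"
  proof (rule ccontr)
    assume "set A \<inter> set B \<noteq> {}"
    then obtain y where y: "y \<in> set A" "y \<in> set B" by blast
    have ya: "y \<noteq> a" using y(2) d2 unfolding B_def by (auto dest: in_set_takeD)
    then have "y \<in> set (take (Suc k) r1)" using y(1) unfolding A_def by simp
    then obtain m where m: "m < Suc k" "m < length r1" "y = r1 ! m"
      by (auto simp: in_set_conv_nth)
    obtain m' where m': "m' < j" "y = r2 ! m'" using y(2) j(1) unfolding B_def
      by (auto simp: in_set_conv_nth)
    have "y \<in> set r2" using m' j(1) by simp
    then have "m = k" using kmin m by (metis less_SucE)
    then have "r2 ! m' = r2 ! j" using m m' j by simp
    then have "m' = j" using d2 m' j(1) by (simp add: nth_eq_iff_index_eq)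
    then show False using m' by simp
  qed
  have dc: "distinct c" unfolding c_def using dA dB disj by simp
  have lc: "length c = Suc (Suc k) + j" unfolding c_def A_def B_def using k(1) j(1) by simp
  have "k \<noteq> 0 \<or> j \<noteq> 0"
  proof (rule ccontr)
    assume "\<not> (k \<noteq> 0 \<or> j \<noteq> 0)"
    then have "r2 ! 0 = r1 ! 0" using j by simp
    then show False using h hd_r1 hd_r2 by simp
  qed
  then have "length c \<ge> 3" using lc by auto
  then show ?thesis unfolding has_cycle_def using wc dc by blast
qed

lemma unique_path:
  assumes sym: "\<And>u v. E u v \<Longrightarrow> E v u" and nc: "\<not> has_cycle V E"
  shows "walk_in V E q1 \<Longrightarrow> distinct q1 \<Longrightarrow> walk_in V E q2 \<Longrightarrow> distinct q2
    \<Longrightarrow> hd q1 = hd q2 \<Longrightarrow> last q1 = last q2 \<Longrightarrow> q1 = q2"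
proof (induction q1 arbitrary: q2)
  case Nil then show ?case by simp
next
  case (Cons a r1)
  obtain r2 where q2: "q2 = a # r2" using Cons.prems(3,5) by (cases q2) auto
  show ?case
  proof (cases "r1 = []")
    case True
    then have "last q2 = a" using Cons.prems by simp
    then show ?thesis using True q2 Cons.prems(4)
      by (cases "r2 = []") (auto simp: q2)
  next
    case ne1: False
    show ?thesis
    proof (cases "r2 = []")
      case True
      then show ?thesis using ne1 q2 Cons.prems(2,6) by auto
    next
      case ne2: False
      show ?thesis
      proof (cases "hd r1 = hd r2")
        case True
        have "r1 = r2"
          by (rule Cons.IH) (use Cons.prems ne1 ne2 True q2 in \<open>auto simp: walk_Cons\<close>)
        then show ?thesis using q2 by simp
      next
        case False
        have "has_cycle V E"
          by (rule two_paths_cycle[OF sym]) (use Cons.prems ne1 ne2 False q2 in auto)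
        then show ?thesis using nc by simp
      qed
    qed
  qed
qed



lemma gdist_path:
  assumes w: "walk_in S F q" and h: "hd q = u" and l: "last q = v"
    and min: "\<And>q'. walk_in S F q' \<Longrightarrow> distinct q' \<Longrightarrow> hd q' = u \<Longrightarrow> last q' = v \<Longrightarrow> length q \<le> length q'"
  shows "gdist S F u v = length q - 1"
  unfolding gdist_def
proof (rule Least_equality)
  have "q \<noteq> []" using w by auto
  then show "\<exists>p. walk_in S F p \<and> hd p = u \<and> last p = v \<and> length p = Suc (length q - 1)"
    using w h l by (intro exI[of _ q]) auto
next
  fix n assume "\<exists>p. walk_in S F p \<and> hd p = u \<and> last p = v \<and> length p = Suc n"
  then obtain p where p: "walk_in S F p" "hd p = u" "last p = v" "length p = Suc n" by blast
  obtain q' where q': "walk_in S F q'" "distinct q'" "hd q' = u" "last q' = v" "length q' \<le> length p"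
    using walk_shorten[OF p(1)] p by blast
  show "length q - 1 \<le> n" using min[OF q'(1-4)] q'(5) p(4) by simp
qed

lemma gdist_sym:
  assumes sym: "\<And>u v. F u v \<Longrightarrow> F v u"
  shows "gdist S F u v = gdist S F v u"
proof -
  have *: "(\<exists>p. walk_in S F p \<and> hd p = u \<and> last p = v \<and> length p = Suc n) \<Longrightarrow>
        (\<exists>p. walk_in S F p \<and> hd p = v \<and> last p = u \<and> length p = Suc n)" for u v n
  proof -
    assume "\<exists>p. walk_in S F p \<and> hd p = u \<and> last p = v \<and> length p = Suc n"
    then obtain p where p: "walk_in S F p" "hd p = u" "last p = v" "length p = Suc n" by blast
    have "p \<noteq> []" using p by auto
    then show ?thesis using p walk_rev[OF sym p(1)]
      by (intro exI[of _ "rev p"]) (auto simp: hd_rev last_rev)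
  qed
  have "(\<exists>p. walk_in S F p \<and> hd p = u \<and> last p = v \<and> length p = Suc n) =
        (\<exists>p. walk_in S F p \<and> hd p = v \<and> last p = u \<and> length p = Suc n)" for n
    using *[of u v n] *[of v u n] by blast
  then show ?thesis unfolding gdist_def by simp
qed

lemma tree_dist:
  assumes sym: "\<And>u v. E u v \<Longrightarrow> E v u" and nc: "\<not> has_cycle V E"
    and w: "walk_in V E q" and d: "distinct q"
  shows "gdist V E (hd q) (last q) = length q - 1"
  by (rule gdist_path[OF w refl refl])
     (metis unique_path[OF sym nc] w d order_refl)

lemma interior:
  assumes w: "walk_in S F q" and d: "distinct q" and m: "w \<in> set q" and h: "w \<noteq> hd q" and l: "w \<noteq> last q"
    and u: "\<And>a b. F a w \<Longrightarrow> F w b \<Longrightarrow> a = b"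
  shows False
proof -
  obtain i where i: "i < length q" "q ! i = w" using m by (auto simp: in_set_conv_nth)
  have ne: "q \<noteq> []" using w by auto
  have "i \<noteq> 0" using i h ne by (metis hd_conv_nth)
  moreover have "i \<noteq> length q - 1" using i l ne by (auto simp: last_conv_nth)
  ultimately have i1: "Suc i < length q" "0 < i" using i by auto
  have "F (q ! (i - 1)) (q ! i)" using walk_edge[OF w, of "i - 1"] i1 by simp
  moreover have "F (q ! i) (q ! Suc i)" using walk_edge[OF w, of i] i1 by simp
  ultimately have "q ! (i - 1) = q ! Suc i" using u i by simp
  then have "i - 1 = Suc i" using d i1 by (simp add: nth_eq_iff_index_eq)
  then show False by simp
qed

lemma seg_props:
  assumes w: "walk_in V E p" and d: "distinct p" and ij: "i \<le> j" "j < length p"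
  defines "s \<equiv> take (Suc j - i) (drop i p)"
  shows "walk_in V E s" "distinct s" "hd s = p ! i" "last s = p ! j" "length s = Suc j - i"
    "set s \<subseteq> set p" "0 < i \<Longrightarrow> p ! 0 \<notin> set s"
proof -
  show "walk_in V E s" unfolding s_def using ij by (intro walk_take walk_drop w) auto
  show "distinct s" unfolding s_def using d by simp
  show "hd s = p ! i" unfolding s_def using ij by (simp add: hd_take hd_drop_conv_nth)
  show "length s = Suc j - i" unfolding s_def using ij by simp
  show "last s = p ! j" unfolding s_def using ij
    by (simp add: last_conv_nth)
  show "set s \<subseteq> set p" unfolding s_def by (meson in_set_dropD in_set_takeD subsetI)
  show "p ! 0 \<notin> set s" if "0 < i"
  proof
    assume "p ! 0 \<in> set s"
    then have "p ! 0 \<in> set (drop i p)" unfolding s_def by (meson in_set_takeD)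
    then obtain k where "k < length p - i" "drop i p ! k = p ! 0" by (auto simp: in_set_conv_nth)
    then have "p ! (i + k) = p ! 0" "i + k < length p" by auto
    then show False using d that nth_eq_iff_index_eq[of p "i + k" 0] by (cases p) auto
  qed
qed



lemma the_pair:
  assumes sym: "\<And>u v. F u v \<Longrightarrow> F v u"
  shows "(THE d. \<exists>u' v'. {u, v} = {u', v'} \<and> d = gdist S F u' v') = gdist S F u v"
  by (rule the_equality) (auto simp: doubleton_eq_iff gdist_sym[OF sym])

lemma P2_insert:
  assumes "a \<notin> A"
  shows "{e. e \<subseteq> insert a A \<and> card e = 2} = {e. e \<subseteq> A \<and> card e = 2} \<union> (\<lambda>v. {a, v}) ` A"
proof (rule set_eqI, rule iffI)
  fix e assume "e \<in> {e. e \<subseteq> insert a A \<and> card e = 2}"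
  then have e: "e \<subseteq> insert a A" "card e = 2" by auto
  then obtain u v where uv: "e = {u, v}" "u \<noteq> v" by (meson card_2_iff)
  show "e \<in> {e. e \<subseteq> A \<and> card e = 2} \<union> (\<lambda>v. {a, v}) ` A"
  proof (cases "a \<in> e")
    case False then show ?thesis using e by auto
  next
    case True
    then show ?thesis using e uv assms by (auto simp: insert_commute)
  qed
next
  fix e assume "e \<in> {e. e \<subseteq> A \<and> card e = 2} \<union> (\<lambda>v. {a, v}) ` A"
  then show "e \<in> {e. e \<subseteq> insert a A \<and> card e = 2}" using assms
    by (auto simp: card_2_iff)
qed

lemma wiener_insert:
  assumes fin: "finite A" and a: "a \<notin> A" and sym: "\<And>u v. F u v \<Longrightarrow> F v u"
  shows "wiener (insert a A) F =
    (\<Sum>e\<in>{e. e \<subseteq> A \<and> card e = 2}. (THE d. \<exists>u v. e = {u, v} \<and> d = gdist (insert a A) F u v))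
    + (\<Sum>v\<in>A. gdist (insert a A) F a v)"
proof -
  let ?D = "\<lambda>e. (THE d. \<exists>u v. e = {u, v} \<and> d = gdist (insert a A) F u v)"
  have fin2: "finite {e. e \<subseteq> A \<and> card e = 2}" using fin by (rule finite_subset[rotated, OF finite_Pow_iff[THEN iffD2]]) auto
  have disj: "{e. e \<subseteq> A \<and> card e = 2} \<inter> (\<lambda>v. {a, v}) ` A = {}" using a by auto
  have inj: "inj_on (\<lambda>v. {a, v}) A" using a by (auto simp: inj_on_def doubleton_eq_iff)
  have "wiener (insert a A) F = sum ?D ({e. e \<subseteq> A \<and> card e = 2} \<union> (\<lambda>v. {a, v}) ` A)"
    unfolding wiener_def P2_insert[OF a] ..
  also have "\<dots> = sum ?D {e. e \<subseteq> A \<and> card e = 2} + sum ?D ((\<lambda>v. {a, v}) ` A)"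
    by (rule sum.union_disjoint[OF fin2 finite_imageI[OF fin] disj])
  also have "sum ?D ((\<lambda>v. {a, v}) ` A) = (\<Sum>v\<in>A. ?D {a, v})"
    using sum.reindex[OF inj, of ?D] by (simp add: comp_def)
  also have "\<dots> = (\<Sum>v\<in>A. gdist (insert a A) F a v)"
    by (rule sum.cong) (auto simp: the_pair[OF sym])
  finally show ?thesis .
qed



lemma walk_join: "walk_in S E a \<Longrightarrow> walk_in S E b \<Longrightarrow> last a = hd b \<Longrightarrow> walk_in S E (a @ tl b)"
proof (induction a rule: induct_list012)
  case (2 u)
  then show ?case by (cases b) auto
next
  case (3 u v r)
  then show ?case by simp
qed simp

lemma last_take: "0 < k \<Longrightarrow> k \<le> length W \<Longrightarrow> last (take k W) = W ! (k - 1)"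
proof -
  assume "0 < k" "k \<le> length W"
  then have "take k W = take (k - 1) W @ [W ! (k - 1)]"
    by (metis Suc_pred' diff_less less_le_trans zero_less_one take_Suc_conv_app_nth)
  then show ?thesis by simp
qed

lemma last_join: "a \<noteq> [] \<Longrightarrow> b \<noteq> [] \<Longrightarrow> last a = hd b \<Longrightarrow> last (a @ tl b) = last b"
  by (cases b) auto

lemma sum_lin: "(\<Sum>j\<in>{1..m}. (c::int) - 2 * int j) = int m * c - int m * (int m + 1)"
  by (induction m) (auto simp: algebra_simps)

context
  fixes V :: "'a set" and E :: "'a \<Rightarrow> 'a \<Rightarrow> bool" and x y y' z :: 'a and p :: "'a list"
  assumes tree: "is_tree V E" and lx: "leaf V E x" and ly: "leaf V E y" and xy: "x \<noteq> y"
    and nxy: "\<not> E x y" and P: "is_path V E p x y" and yy: "E y y'" and zV: "z \<notin> V"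
begin

lemma sym: "E u v \<Longrightarrow> E v u" using tree by (auto simp: is_tree_def simple_graph_def)
lemma inV: "E u v \<Longrightarrow> u \<in> V \<and> v \<in> V" using tree by (auto simp: is_tree_def simple_graph_def)
lemma finV: "finite V" using tree by (auto simp: is_tree_def simple_graph_def)
lemma nc: "\<not> has_cycle V E" using tree by (auto simp: is_tree_def)
lemma conn: "u \<in> V \<Longrightarrow> v \<in> V \<Longrightarrow> reach_in V E u v"
  using tree by (auto simp: is_tree_def connected_graph_def)
lemma pw: "walk_in V E p" "distinct p" "hd p = x" "last p = y"
  using P by (auto simp: is_path_def)

lemma leaf_uniq: "leaf V E w \<Longrightarrow> E w a \<Longrightarrow> E w b \<Longrightarrow> a = b"
proof -
  assume l: "leaf V E w" and a: "E w a" and b: "E w b"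
  have "card {v \<in> V. E w v} = 1" using l by (simp add: leaf_def degree_def)
  then obtain c where c: "{v \<in> V. E w v} = {c}" by (rule card_1_singletonE)
  have "a \<in> {v \<in> V. E w v}" "b \<in> {v \<in> V. E w v}" using a b inV by auto
  then show "a = b" using c by auto
qed

lemma pne: "p \<noteq> []" using pw by auto

lemma len: "3 \<le> length p"
proof -
  consider "p = []" | a where "p = [a]" | a b where "p = [a, b]" | a b c r where "p = a # b # c # r"
    by (metis list.exhaust)
  then show ?thesis
  proof cases
    case 1 then show ?thesis using pne by simp
  next
    case 2 then show ?thesis using pw xy by simp
  next
    case 3 then show ?thesis using pw nxy by simp
  next
    case 4 then show ?thesis by simp
  qed
qed

lemma p0: "p ! 0 = x" using pw pne by (simp add: hd_conv_nth)
lemma plast: "p ! (length p - 1) = y" using pw pne by (simp add: last_conv_nth)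
lemma x_in: "x \<in> set p" using p0 pne by (metis nth_mem length_greater_0_conv)
lemma Ex1: "E x (p ! 1)" using walk_edge[OF pw(1), of 0] len p0 by simp
lemma Ey2: "E y (p ! (length p - 2))"
proof -
  have "E (p ! (length p - 2)) (p ! Suc (length p - 2))" using walk_edge[OF pw(1), of "length p - 2"] len by simp
  moreover have "Suc (length p - 2) = length p - 1" using len by simp
  ultimately show ?thesis using plast sym by simp
qed
lemma nb_x: "E x a \<Longrightarrow> a = p ! 1" using leaf_uniq[OF lx _ Ex1] by blast
lemma nb_y: "E y a \<Longrightarrow> a = p ! (length p - 2)" using leaf_uniq[OF ly _ Ey2] by blast
lemma y'_eq: "y' = p ! (length p - 2)" using nb_y yy by blast
lemma y'_V: "y' \<in> V" using inV yy by blast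
lemma y'_ne_x: "y' \<noteq> x" using yy nxy sym by blast

lemma seg_walk: "i \<le> j \<Longrightarrow> j < length p \<Longrightarrow> walk_in V E (take (Suc j - i) (drop i p))"
  using seg_props[OF pw(1,2)] by blast

lemma branch_path:
  assumes "v \<in> branch_verts V E p i"
  shows "\<exists>q. walk_in (V - set p) E q \<and> distinct q \<and> E (p ! i) (hd q) \<and> last q = v"
proof -
  obtain w W where W: "walk_in (V - set p) E W" "hd W = v" "last W = w" "E w (p ! i)"
    using assms unfolding branch_verts_def reach_in_def by blast
  have ne: "W \<noteq> []" using W by auto
  have "walk_in (V - set p) E (rev W)" using walk_rev[OF _ W(1)] sym by blast
  then obtain q where q: "walk_in (V - set p) E q" "distinct q" "hd q = hd (rev W)" "last q = last (rev W)"
    using walk_shorten by blast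
  then show ?thesis using W ne sym by (intro exI[of _ q]) (auto simp: hd_rev last_rev)
qed

lemma cover:
  assumes v: "v \<in> V - set p"
  shows "\<exists>i\<in>{1..length p - 2}. v \<in> branch_verts V E p i"
proof -
  obtain W where W: "walk_in V E W" "hd W = v" "last W = x"
    using conn[of v x] v x_in pw(1) walk_set unfolding reach_in_def by blast
  have ne: "W \<noteq> []" using W by auto
  define k where "k = (LEAST k. k < length W \<and> W ! k \<in> set p)"
  have ex: "length W - 1 < length W \<and> W ! (length W - 1) \<in> set p"
    using ne W x_in by (metis diff_less last_conv_nth length_greater_0_conv zero_less_one)
  have k: "k < length W" "W ! k \<in> set p"
    using LeastI_ex[of "\<lambda>k. k < length W \<and> W ! k \<in> set p"] ex unfolding k_def by blast+
  have kmin: "W ! m \<notin> set p" if "m < k" for m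
    using not_less_Least[of m "\<lambda>k. k < length W \<and> W ! k \<in> set p"] that k(1) unfolding k_def by auto
  have "W ! 0 = v" using W ne by (simp add: hd_conv_nth)
  then have k0: "k \<noteq> 0" using k v by (metis DiffD2)
  define W' where "W' = take k W"
  have wW': "walk_in V E W'" unfolding W'_def using walk_take[OF W(1)] k0 by simp
  have sW': "set W' \<subseteq> V - set p"
  proof
    fix u assume "u \<in> set W'"
    then obtain m where "m < k" "u = W ! m" unfolding W'_def using k(1) by (auto simp: in_set_conv_nth)
    then show "u \<in> V - set p" using kmin walk_set[OF W(1)] k(1) by auto
  qed
  have wW'': "walk_in (V - set p) E W'" using walk_mono[OF wW' sW'] .
  have hW': "hd W' = v" unfolding W'_def using W k0 by simp
  have lW': "last W' = W ! (k - 1)" unfolding W'_def using k0 k(1)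
    by (simp add: last_take)
  have eW: "E (W ! (k - 1)) (W ! k)" using walk_edge[OF W(1), of "k - 1"] k0 k(1) by simp
  obtain i where i: "i < length p" "W ! k = p ! i" using k(2) by (auto simp: in_set_conv_nth)
  have wk1: "W ! (k - 1) \<notin> set p" using kmin k0 by simp
  have "v \<in> branch_verts V E p i"
    unfolding branch_verts_def reach_in_def using v wW'' hW' lW' eW i
    by (intro CollectI conjI exI[of _ "W ! (k - 1)"] exI[of _ W']) auto
  moreover have "i \<noteq> 0"
  proof
    assume "i = 0"
    then have "E x (W ! (k - 1))" using eW i p0 sym by simp
    then have "W ! (k - 1) = p ! 1" by (rule nb_x)
    then show False using wk1 len by simp
  qed
  moreover have "i \<noteq> length p - 1"
  proof
    assume "i = length p - 1"
    then have "E y (W ! (k - 1))" using eW i plast sym by simp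
    then have "W ! (k - 1) = p ! (length p - 2)" by (rule nb_y)
    then show False using wk1 len by simp
  qed
  ultimately show ?thesis using i by auto
qed

lemma branch_disj:
  assumes ij: "i < j" "j < length p" and vi: "v \<in> branch_verts V E p i" and vj: "v \<in> branch_verts V E p j"
  shows False
proof -
  obtain q1 where q1: "walk_in (V - set p) E q1" "distinct q1" "E (p ! i) (hd q1)" "last q1 = v"
    using branch_path[OF vi] by blast
  obtain q2 where q2: "walk_in (V - set p) E q2" "distinct q2" "E (p ! j) (hd q2)" "last q2 = v"
    using branch_path[OF vj] by blast
  have ne1: "q1 \<noteq> []" and ne2: "q2 \<noteq> []" using q1 q2 by auto
  have wr2: "walk_in (V - set p) E (rev q2)" using walk_rev[OF _ q2(1)] sym by blast
  have j1: "last q1 = hd (rev q2)" using q1(4) q2(4) ne2 by (simp add: hd_rev)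
  have wW: "walk_in (V - set p) E (q1 @ tl (rev q2))" by (rule walk_join[OF q1(1) wr2 j1])
  obtain c where c: "walk_in (V - set p) E c" "distinct c" "hd c = hd (q1 @ tl (rev q2))"
      "last c = last (q1 @ tl (rev q2))"
    using walk_shorten[OF wW] by blast
  have hc: "hd c = hd q1" using c(3) ne1 by simp
  have lc: "last c = hd q2" using c(4) last_join[OF ne1 _ j1] ne2 by (simp add: last_rev)
  have cne: "c \<noteq> []" using c by auto
  have sc: "set c \<subseteq> V - set p" using walk_set[OF c(1)] .
  have pi: "p ! i \<in> set p" "p ! j \<in> set p" using ij by auto
  have piV: "p ! i \<in> V" "p ! j \<in> V" using pi walk_set[OF pw(1)] by auto
  define P1 where "P1 = p ! i # c @ [p ! j]"
  have wc: "walk_in V E c" using walk_mono[OF c(1)] sc by auto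
  have "walk_in V E (c @ [p ! j])"
    by (rule walk_append[OF wc]) (use piV lc q2(3) sym in auto)
  then have wP1: "walk_in V E P1" unfolding P1_def using piV q1(3) hc cne by (simp add: walk_Cons)
  have "p ! i \<noteq> p ! j" using ij pw(2) by (simp add: nth_eq_iff_index_eq)
  then have dP1: "distinct P1" unfolding P1_def using c(2) sc pi by auto
  define s where "s = take (Suc j - i) (drop i p)"
  have s: "walk_in V E s" "distinct s" "hd s = p ! i" "last s = p ! j" "set s \<subseteq> set p"
    using seg_props[OF pw(1,2), of i j] ij unfolding s_def by auto
  have "P1 = s" by (rule unique_path[OF _ nc wP1 dP1 s(1,2)]) (use sym s in \<open>auto simp: P1_def\<close>)
  moreover have "hd c \<in> set P1" unfolding P1_def using cne by simp
  moreover have "hd c \<notin> set p" using sc cne hd_in_set by blast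
  ultimately show False using s(5) by blast
qed

lemma dT_path: "j < length p \<Longrightarrow> gdist V E x (p ! j) = j"
proof -
  assume j: "j < length p"
  define s where "s = take (Suc j - 0) (drop 0 p)"
  have s: "walk_in V E s" "distinct s" "hd s = p ! 0" "last s = p ! j" "length s = Suc j - 0"
    using seg_props[OF pw(1,2), of 0 j] j unfolding s_def by auto
  show ?thesis using tree_dist[OF _ nc s(1,2)] sym s p0 by auto
qed

lemma dT_branch:
  assumes i: "i < length p" and q: "walk_in (V - set p) E q" "distinct q" "E (p ! i) (hd q)"
  shows "gdist V E x (last q) = i + length q"
proof -
  define s where "s = take (Suc i - 0) (drop 0 p)"
  have s: "walk_in V E s" "distinct s" "hd s = p ! 0" "last s = p ! i" "length s = Suc i - 0" "set s \<subseteq> set p"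
    using seg_props[OF pw(1,2), of 0 i] i unfolding s_def by auto
  have sq: "set q \<subseteq> V - set p" using walk_set[OF q(1)] .
  have qne: "q \<noteq> []" using q by auto
  have w: "walk_in V E (s @ q)" by (rule walk_append[OF s(1) walk_mono[OF q(1)]]) (use sq s q in auto)
  have d: "distinct (s @ q)" using s q sq by auto
  have "gdist V E (hd (s @ q)) (last (s @ q)) = length (s @ q) - 1" by (rule tree_dist[OF _ nc w d]) (rule sym)
  then show ?thesis using s qne p0 by (cases s) auto
qed

lemma Fsym: "move_edges E x y' z u v \<Longrightarrow> move_edges E x y' z v u"
  using sym by (auto simp: move_edges_def)

lemma Fz1: "move_edges E x y' z a z \<Longrightarrow> a = y'"
  using inV zV by (auto simp: move_edges_def)
lemma Fz2: "move_edges E x y' z z b \<Longrightarrow> b = y'"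
  using inV zV by (auto simp: move_edges_def)

lemma to_T': "walk_in V E q \<Longrightarrow> x \<notin> set q \<Longrightarrow> walk_in (move_verts V x z) (move_edges E x y' z) q"
  unfolding walk_in_def move_verts_def move_edges_def
  by (auto dest: nth_mem)

lemma from_T': "walk_in (move_verts V x z) (move_edges E x y' z) q \<Longrightarrow> z \<notin> set q \<Longrightarrow> walk_in V E q \<and> x \<notin> set q"
proof -
  assume w: "walk_in (move_verts V x z) (move_edges E x y' z) q" and zq: "z \<notin> set q"
  have sq: "set q \<subseteq> V - {x}" using walk_set[OF w] zq unfolding move_verts_def by auto
  have "E (q ! i) (q ! Suc i)" if "Suc i < length q" for i
  proof -
    have "move_edges E x y' z (q ! i) (q ! Suc i)" using walk_edge[OF w that] .
    moreover have "q ! i \<noteq> z" "q ! Suc i \<noteq> z" using zq that nth_mem[of i q] nth_mem[of "Suc i" q] by auto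
    ultimately show ?thesis unfolding move_edges_def by auto
  qed
  then show ?thesis using sq w unfolding walk_in_def by auto
qed

lemma dT'_z:
  assumes w: "walk_in V E P" and d: "distinct P" and h: "hd P = y'" and xP: "x \<notin> set P"
  shows "gdist (move_verts V x z) (move_edges E x y' z) z (last P) = length P"
proof -
  have Pne: "P \<noteq> []" using w by auto
  have zP: "z \<notin> set P" using walk_set[OF w] zV by auto
  have wT: "walk_in (move_verts V x z) (move_edges E x y' z) P" by (rule to_T'[OF w xP])
  have wz: "walk_in (move_verts V x z) (move_edges E x y' z) (z # P)"
    using wT Pne h by (simp add: walk_Cons move_verts_def move_edges_def)
  have "gdist (move_verts V x z) (move_edges E x y' z) z (last P) = length (z # P) - 1"
  proof (rule gdist_path[OF wz])
    show "last (z # P) = last P" using Pne by simp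
  next
    fix q' assume q': "walk_in (move_verts V x z) (move_edges E x y' z) q'" "distinct q'" "hd q' = z" "last q' = last P"
    obtain q'' where qq: "q' = z # q''" using q'(1,3) by (cases q') auto
    have lPV: "last P \<in> V" using walk_set[OF w] Pne last_in_set by blast
    then have "q'' \<noteq> []" using q'(4) qq zV by auto
    then have e: "move_edges E x y' z z (hd q'')" "walk_in (move_verts V x z) (move_edges E x y' z) q''"
      using q'(1) qq by (auto simp: walk_Cons)
    have hq: "hd q'' = y'" using Fz2[OF e(1)] .
    have zq: "z \<notin> set q''" using q'(2) qq by simp
    have wq: "walk_in V E q''" using from_T'[OF e(2) zq] by blast
    have "q'' = P"
      by (rule unique_path[OF _ nc wq _ w d]) (use sym q' qq hq h \<open>q'' \<noteq> []\<close> in auto)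
    then show "length (z # P) \<le> length q'" using qq by simp
  qed simp
  then show ?thesis by simp
qed

lemma dT'_uv:
  assumes u: "u \<in> V - {x}" and v: "v \<in> V - {x}"
  shows "gdist (move_verts V x z) (move_edges E x y' z) u v = gdist V E u v"
proof -
  obtain W where W: "walk_in V E W" "hd W = u" "last W = v" using conn[of u v] u v unfolding reach_in_def by blast
  obtain P where P: "walk_in V E P" "distinct P" "hd P = u" "last P = v" using walk_shorten[OF W(1)] W by metis
  have xP: "x \<notin> set P"
  proof
    assume "x \<in> set P"
    show False
      by (rule interior[OF P(1,2) \<open>x \<in> set P\<close>]) (use u v P sym leaf_uniq[OF lx] in auto)
  qed
  have wT: "walk_in (move_verts V x z) (move_edges E x y' z) P" by (rule to_T'[OF P(1) xP])
  have "gdist (move_verts V x z) (move_edges E x y' z) u v = length P - 1"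
  proof (rule gdist_path[OF wT P(3,4)])
    fix q' assume q': "walk_in (move_verts V x z) (move_edges E x y' z) q'" "distinct q'" "hd q' = u" "last q' = v"
    have zq: "z \<notin> set q'"
    proof
      assume "z \<in> set q'"
      show False
        by (rule interior[OF q'(1,2) \<open>z \<in> set q'\<close>]) (use u v q' zV Fz1 Fz2 in auto)
    qed
    have wq: "walk_in V E q'" using from_T'[OF q'(1) zq] by blast
    have "q' = P" by (rule unique_path[OF _ nc wq q'(2) P(1,2)]) (use sym q' P in auto)
    then show "length P \<le> length q'" by simp
  qed
  moreover have "gdist V E u v = length P - 1" using tree_dist[OF _ nc P(1,2)] sym P by auto
  ultimately show ?thesis by simp
qed

lemma dT'_p:
  assumes j: "1 \<le> j" "j < length p"
  shows "gdist (move_verts V x z) (move_edges E x y' z) z (p ! j)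
       = (if j = length p - 1 then 2 else length p - 1 - j)"
proof (cases "j = length p - 1")
  case True
  define s where "s = take (Suc (length p - 1) - (length p - 2)) (drop (length p - 2) p)"
  have s: "walk_in V E s" "distinct s" "hd s = p ! (length p - 2)" "last s = p ! (length p - 1)"
     "length s = Suc (length p - 1) - (length p - 2)" "0 < length p - 2 \<Longrightarrow> p ! 0 \<notin> set s"
    using seg_props[OF pw(1,2), of "length p - 2" "length p - 1"] len unfolding s_def by auto
  have "x \<notin> set s" using s(6) len p0 by auto
  then have "gdist (move_verts V x z) (move_edges E x y' z) z (last s) = length s"
    using dT'_z[OF s(1,2)] s(3) y'_eq by simp
  then show ?thesis using True s(4,5) len by simp
next
  case False
  then have j2: "j \<le> length p - 2" using j by auto
  define s where "s = take (Suc (length p - 2) - j) (drop j p)"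
  have s: "walk_in V E s" "distinct s" "hd s = p ! j" "last s = p ! (length p - 2)"
     "length s = Suc (length p - 2) - j" "p ! 0 \<notin> set s"
    using seg_props[OF pw(1,2), of j "length p - 2"] j j2 unfolding s_def by auto
  have sne: "s \<noteq> []" using s by auto
  have w: "walk_in V E (rev s)" using walk_rev[OF _ s(1)] sym by blast
  have "gdist (move_verts V x z) (move_edges E x y' z) z (last (rev s)) = length (rev s)"
    by (rule dT'_z[OF w]) (use s sne y'_eq p0 in \<open>auto simp: hd_rev\<close>)
  then show ?thesis using False s sne j2 len by (simp add: last_rev)
qed

lemma dT'_branch:
  assumes i: "1 \<le> i" "i \<le> length p - 2" and q: "walk_in (V - set p) E q" "distinct q" "E (p ! i) (hd q)"
  shows "gdist (move_verts V x z) (move_edges E x y' z) z (last q) = (length p - 1 - i) + length q"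
proof -
  define s where "s = take (Suc (length p - 2) - i) (drop i p)"
  have s: "walk_in V E s" "distinct s" "hd s = p ! i" "last s = p ! (length p - 2)"
     "length s = Suc (length p - 2) - i" "p ! 0 \<notin> set s" "set s \<subseteq> set p"
    using seg_props[OF pw(1,2), of i "length p - 2"] i len unfolding s_def by auto
  have sne: "s \<noteq> []" using s by auto
  have qne: "q \<noteq> []" using q by auto
  have sq: "set q \<subseteq> V - set p" using walk_set[OF q(1)] .
  have wr: "walk_in V E (rev s)" using walk_rev[OF _ s(1)] sym by blast
  have w: "walk_in V E (rev s @ q)"
    by (rule walk_append[OF wr walk_mono[OF q(1)]]) (use sq s q sne in \<open>auto simp: last_rev\<close>)
  have d: "distinct (rev s @ q)" using s q sq by auto
  have xn: "x \<notin> set (rev s @ q)" using s(6) p0 sq x_in by auto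
  have "gdist (move_verts V x z) (move_edges E x y' z) z (last (rev s @ q)) = length (rev s @ q)"
    by (rule dT'_z[OF w d _ xn]) (use s sne y'_eq in \<open>auto simp: hd_rev\<close>)
  then show ?thesis using qne s(5) len i by simp
qed

lemma main_eq:
  "int (wiener (move_verts V x z) (move_edges E x y' z)) - int (wiener V E)
    = (\<Sum>i\<in>{1..length p - 2}.
              (int (length p - 1) - 2 * int i) * int (card (branch_verts V E p i)))
           - (int (length p - 1) - 2)"
proof -
  define A where "A = V - {x}"
  define G where "G = move_edges E x y' z"
  define V' where "V' = move_verts V x z"
  define B where "B = branch_verts V E p"
  have xV: "x \<in> V" using lx by (simp add: leaf_def)
  have finA: "finite A" unfolding A_def using finV by simp
  have VA: "insert x A = V" unfolding A_def using xV by auto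
  have V'A: "insert z A = V'" unfolding A_def V'_def move_verts_def ..
  have xA: "x \<notin> A" and zA: "z \<notin> A" unfolding A_def using zV by auto
  let ?S = "\<lambda>W F. (\<Sum>e\<in>{e. e \<subseteq> A \<and> card e = 2}. (THE d. \<exists>u v. e = {u, v} \<and> d = gdist W F u v))"
  have W: "wiener V E = ?S V E + (\<Sum>v\<in>A. gdist V E x v)"
    using wiener_insert[OF finA xA, of E] sym unfolding VA by blast
  have W': "wiener V' G = ?S V' G + (\<Sum>v\<in>A. gdist V' G z v)"
    using wiener_insert[OF finA zA, of G] Fsym unfolding V'A G_def by blast
  have SS: "?S V' G = ?S V E"
  proof (rule sum.cong[OF refl])
    fix e assume "e \<in> {e. e \<subseteq> A \<and> card e = 2}"
    then obtain u v where uv: "e = {u, v}" "u \<in> A" "v \<in> A" by (auto simp: card_2_iff)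
    have "gdist V' G u v = gdist V E u v" using dT'_uv uv unfolding A_def V'_def G_def by blast
    moreover have "(THE d. \<exists>u' v'. {u, v} = {u', v'} \<and> d = gdist V' G u' v') = gdist V' G u v"
      by (rule the_pair) (unfold G_def, erule Fsym)
    moreover have "(THE d. \<exists>u' v'. {u, v} = {u', v'} \<and> d = gdist V E u' v') = gdist V E u v"
      by (rule the_pair) (erule sym)
    ultimately show "(THE d. \<exists>u v. e = {u, v} \<and> d = gdist V' G u v) = (THE d. \<exists>u v. e = {u, v} \<and> d = gdist V E u v)"
      unfolding uv(1) by simp
  qed
  define h where "h v = int (gdist V' G z v) - int (gdist V E x v)" for v
  have diff: "int (wiener V' G) - int (wiener V E) = (\<Sum>v\<in>A. h v)"
  proof -
    have "int (wiener V' G) - int (wiener V E) = int (\<Sum>v\<in>A. gdist V' G z v) - int (\<Sum>v\<in>A. gdist V E x v)"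
      unfolding W W' SS by simp
    also have "\<dots> = (\<Sum>v\<in>A. h v)" unfolding h_def of_nat_sum by (simp add: sum_subtractf)
    finally show ?thesis .
  qed
  have split: "(\<Sum>v\<in>A. h v) = (\<Sum>v\<in>A \<inter> set p. h v) + (\<Sum>v\<in>A - set p. h v)"
    by (rule sum.Int_Diff[OF finA])
  have Ap: "A \<inter> set p = (\<lambda>j. p ! j) ` {1..length p - 1}"
  proof (rule set_eqI, rule iffI)
    fix v assume "v \<in> A \<inter> set p"
    then obtain j where j: "j < length p" "v = p ! j" "v \<noteq> x" unfolding A_def by (auto simp: in_set_conv_nth)
    have "j \<noteq> 0"
    proof
      assume "j = 0" then show False using j p0 by simp
    qed
    then show "v \<in> (\<lambda>j. p ! j) ` {1..length p - 1}" using j by auto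
  next
    fix v assume "v \<in> (\<lambda>j. p ! j) ` {1..length p - 1}"
    then obtain j where j: "1 \<le> j" "j \<le> length p - 1" "v = p ! j" by auto
    then have jl: "j < length p" using len by auto
    have "p ! j \<noteq> p ! 0" using pw(2) jl j(1) len pne nth_eq_iff_index_eq[of p j 0] by auto
    then show "v \<in> A \<inter> set p" unfolding A_def using j jl p0 walk_set[OF pw(1)] by auto
  qed
  have inj: "inj_on (\<lambda>j. p ! j) {1..length p - 1}"
    using pw(2) len by (auto simp: inj_on_def nth_eq_iff_index_eq)
  have hp: "h (p ! j) = (if j = length p - 1 then 2 - int (length p - 1) else int (length p - 1) - 2 * int j)"
    if "j \<in> {1..length p - 1}" for j
  proof -
    have j: "1 \<le> j" "j < length p" using that len by auto
    have e1: "gdist V' G z (p ! j) = (if j = length p - 1 then 2 else length p - 1 - j)"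
      unfolding V'_def G_def by (rule dT'_p[OF j])
    have e2: "gdist V E x (p ! j) = j" by (rule dT_path[OF j(2)])
    show ?thesis
    proof (cases "j = length p - 1")
      case True then show ?thesis unfolding h_def e1 e2 by simp
    next
      case False
      have "int (length p - 1 - j) = int (length p - 1) - int j" using j by (simp add: of_nat_diff)
      then show ?thesis unfolding h_def e1 e2 using False by simp
    qed
  qed
  have ins: "{1..length p - 1} = insert (length p - 1) {1..length p - 2}" using len by auto
  have part1: "(\<Sum>v\<in>A \<inter> set p. h v) = 2 - int (length p - 1)"
  proof -
    have "(\<Sum>v\<in>A \<inter> set p. h v) = (\<Sum>j\<in>{1..length p - 1}. h (p ! j))"
      unfolding Ap by (rule sum.reindex[OF inj, unfolded comp_def])
    also have "\<dots> = (\<Sum>j\<in>{1..length p - 1}. (if j = length p - 1 then 2 - int (length p - 1) else int (length p - 1) - 2 * int j))"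
      by (rule sum.cong[OF refl]) (rule hp)
    also have "\<dots> = (2 - int (length p - 1)) + (\<Sum>j\<in>{1..length p - 2}. (if j = length p - 1 then 2 - int (length p - 1) else int (length p - 1) - 2 * int j))"
    proof -
      have nin: "length p - 1 \<notin> {1..length p - 2}" using len by auto
      show ?thesis unfolding ins sum.insert[OF finite_atLeastAtMost nin] if_P[OF refl] ..
    qed
    also have "(\<Sum>j\<in>{1..length p - 2}. (if j = length p - 1 then 2 - int (length p - 1) else int (length p - 1) - 2 * int j))
        = (\<Sum>j\<in>{1..length p - 2}. int (length p - 1) - 2 * int j)"
      by (rule sum.cong[OF refl]) (use len in auto)
    also have "(\<Sum>j\<in>{1..length p - 2}. int (length p - 1) - 2 * int j) = 0"
    proof -
      have "int (length p - 1) = int (length p - 2) + 1" using len by simp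
      then show ?thesis unfolding sum_lin by simp
    qed
    finally show ?thesis by simp
  qed
  have Ad: "A - set p = (\<Union>i\<in>{1..length p - 2}. B i)"
  proof (rule set_eqI, rule iffI)
    fix v assume "v \<in> A - set p"
    then have "v \<in> V - set p" unfolding A_def by auto
    then show "v \<in> (\<Union>i\<in>{1..length p - 2}. B i)" using cover unfolding B_def by blast
  next
    fix v assume "v \<in> (\<Union>i\<in>{1..length p - 2}. B i)"
    then show "v \<in> A - set p" unfolding A_def B_def branch_verts_def using x_in by auto
  qed
  have finB: "finite (B i)" for i unfolding B_def branch_verts_def using finV by simp
  have disjB: "\<forall>i\<in>{1..length p - 2}. \<forall>j\<in>{1..length p - 2}. i \<noteq> j \<longrightarrow> B i \<inter> B j = {}"
  proof (intro ballI impI)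
    fix i j assume ij: "i \<in> {1..length p - 2}" "j \<in> {1..length p - 2}" "i \<noteq> j"
    show "B i \<inter> B j = {}"
    proof (rule ccontr)
      assume "B i \<inter> B j \<noteq> {}"
      then obtain v where v: "v \<in> B i" "v \<in> B j" by blast
      show False
      proof (cases "i < j")
        case True
        have "j < length p" using ij(2) len by auto
        then show False using branch_disj[OF True] v unfolding B_def by blast
      next
        case False then have "j < i" using ij by auto
        moreover have "i < length p" using ij(1) len by auto
        ultimately show False using branch_disj v unfolding B_def by blast
      qed
    qed
  qed
  have hB: "h v = int (length p - 1) - 2 * int i" if iI: "i \<in> {1..length p - 2}" and vB: "v \<in> B i" for i v
  proof -
    obtain q where q: "walk_in (V - set p) E q" "distinct q" "E (p ! i) (hd q)" "last q = v"
      using branch_path vB unfolding B_def by blast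
    have i: "1 \<le> i" "i \<le> length p - 2" "i < length p" using iI len by auto
    have e1: "gdist V' G z v = (length p - 1 - i) + length q"
      unfolding V'_def G_def using dT'_branch[OF i(1,2) q(1-3)] q(4) by simp
    have e2: "gdist V E x v = i + length q" using dT_branch[OF i(3) q(1-3)] q(4) by simp
    have "int (length p - 1 - i) = int (length p - 1) - int i" using i by (simp add: of_nat_diff)
    then show ?thesis unfolding h_def e1 e2 by simp
  qed
  have part2: "(\<Sum>v\<in>A - set p. h v) = (\<Sum>i\<in>{1..length p - 2}.
              (int (length p - 1) - 2 * int i) * int (card (B i)))"
  proof -
    have "(\<Sum>v\<in>A - set p. h v) = (\<Sum>i\<in>{1..length p - 2}. (\<Sum>v\<in>B i. h v))"
      unfolding Ad by (rule sum.UNION_disjoint) (use finB disjB in auto)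
    also have "\<dots> = (\<Sum>i\<in>{1..length p - 2}. (int (length p - 1) - 2 * int i) * int (card (B i)))"
    proof (rule sum.cong[OF refl])
      fix i assume i: "i \<in> {1..length p - 2}"
      have "(\<Sum>v\<in>B i. h v) = (\<Sum>v\<in>B i. int (length p - 1) - 2 * int i)"
        by (rule sum.cong[OF refl]) (rule hB[OF i])
      then show "(\<Sum>v\<in>B i. h v) = (int (length p - 1) - 2 * int i) * int (card (B i))"
        by (simp add: mult.commute)
    qed
    finally show ?thesis .
  qed
  have "int (wiener V' G) - int (wiener V E) = (\<Sum>i\<in>{1..length p - 2}.
              (int (length p - 1) - 2 * int i) * int (card (B i))) - (int (length p - 1) - 2)"
    using diff split part1 part2 by simp
  then show ?thesis unfolding V'_def G_def B_def .
qed

end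


theorem mainTheorem10:
  fixes V :: "'a set" and E :: "'a \<Rightarrow> 'a \<Rightarrow> bool"
    and x y y' z :: 'a and p :: "'a list"
  assumes "is_tree V E"
    and "leaf V E x" and "leaf V E y" and "x \<noteq> y"
    and "\<not> E x y"
    and "is_path V E p x y"
    and "E y y'"
    and "z \<notin> V"
  shows "int (wiener (move_verts V x z) (move_edges E x y' z))
           - int (wiener V E)
         = (\<Sum>i\<in>{1..length p - 2}.
              (int (length p - 1) - 2 * int i) * int (card (branch_verts V E p i)))
           - (int (length p - 1) - 2)"
  using assms by (rule main_eq)

end
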